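(* Let $\gamma>0$, $\tau>3$, $\alpha\in D_{\gamma,\tau}$, and let $p_n/q_n$ be the convergents of $\alpha$; for even $n$ let $I_n:=\left(\frac{p_n}{q_n},\frac{p_{n+2}}{q_{n+2}}\right)$. Then there exists $N\in\mathbb{N}$ such that for all even $n>N$, $$\mu\left(\bigcup_{\frac{p}{q}\in I_n,\ q\ge q_{n+2}}\left(\frac{p}{q}-\frac{\gamma}{q^{\tau+1}},\ \frac{p}{q}+\frac{\gamma}{q^{\tau+1}}\right)\right)<\frac{2\gamma}{q_{n+2}^{\tau-1}},$$ where the union is over rationals $p/q$ ($p\in\mathbb{Z}$, $q\in\mathbb{N}$) and $\mu$ is Lebesgue measure.
   Context: For $x\in\mathbb{R}$, $\|x\|:=\min_{p\in\mathbb{Z}}|x-p|$; $\mathbb{N}=\{1,2,\dots\}$. For $\gamma>0,\tau\ge1$, $D_{\gamma,\tau}:=\{\alpha\in(0,1): \|q\alpha\|\ge\gamma/q^\tau\ \forall q\in\mathbb{N}\}$; its elements are irrational. For irrational $\alpha\in(0,1)$ write $\alpha=\cfrac{1}{a_1+\cfrac{1}{a_2+\cdots}}$, and let $p_n/q_n$ ($n\ge0$) be its convergents: $p_{-1}=1,q_{-1}=0,p_0=0,q_0=1$, $p_n=a_np_{n-1}+p_{n-2}$, $q_n=a_nq_{n-1}+q_{n-2}$. *)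

theory Defs
  imports "HOL-Analysis.Analysis"
begin

definition dist_int :: "real \<Rightarrow> real" where
  "dist_int x = (INF p::int. \<bar>x - of_int p\<bar>)"

definition D_set :: "real \<Rightarrow> real \<Rightarrow> real set" where
  "D_set \<gamma> \<tau> = {\<alpha>. 0 < \<alpha> \<and> \<alpha> < 1 \<and>
      (\<forall>q::nat. q \<ge> 1 \<longrightarrow> dist_int (real q * \<alpha>) \<ge> \<gamma> / real q powr \<tau>)}"

fun cf_rem :: "real \<Rightarrow> nat \<Rightarrow> real" where
  "cf_rem \<alpha> 0 = \<alpha>"
| "cf_rem \<alpha> (Suc k) = frac (1 / cf_rem \<alpha> k)"

text \<open>Partial quotients: alpha = 1/(a_1 + 1/(a_2 + ...)), a_n = floor(1/cf_rem alpha (n-1)) for n >= 1.\<close>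
definition cf_a :: "real \<Rightarrow> nat \<Rightarrow> int" where
  "cf_a \<alpha> n = \<lfloor>1 / cf_rem \<alpha> (n - 1)\<rfloor>"

text \<open>Shifted recursions: cf_P alpha k = p_(k-1), cf_Q alpha k = q_(k-1).\<close>
fun cf_P :: "real \<Rightarrow> nat \<Rightarrow> int" where
  "cf_P \<alpha> 0 = 1"
| "cf_P \<alpha> (Suc 0) = 0"
| "cf_P \<alpha> (Suc (Suc k)) = cf_a \<alpha> (Suc k) * cf_P \<alpha> (Suc k) + cf_P \<alpha> k"

fun cf_Q :: "real \<Rightarrow> nat \<Rightarrow> int" where
  "cf_Q \<alpha> 0 = 0"
| "cf_Q \<alpha> (Suc 0) = 1"
| "cf_Q \<alpha> (Suc (Suc k)) = cf_a \<alpha> (Suc k) * cf_Q \<alpha> (Suc k) + cf_Q \<alpha> k"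

definition conv_p :: "real \<Rightarrow> nat \<Rightarrow> int" where
  "conv_p \<alpha> n = cf_P \<alpha> (Suc n)"

definition conv_q :: "real \<Rightarrow> nat \<Rightarrow> int" where
  "conv_q \<alpha> n = cf_Q \<alpha> (Suc n)"

definition I_int :: "real \<Rightarrow> nat \<Rightarrow> real set" where
  "I_int \<alpha> n = {conv_p \<alpha> n / conv_q \<alpha> n <..< conv_p \<alpha> (n+2) / conv_q \<alpha> (n+2)}"

end

theory Submission
  imports Defs "HOL-Real_Asymp.Real_Asymp"
begin
lemma tele: fixes x \<tau> :: real assumes "x \<ge> 2" "\<tau> > 1"
  shows "x powr (-\<tau>) \<le> ((x-1) powr (1-\<tau>) - x powr (1-\<tau>)) / (\<tau>-1)"
proof -
  have "\<exists>z. x-1 < z \<and> z < x \<and> (x powr (1-\<tau>) - (x-1) powr (1-\<tau>) = (x - (x-1)) * ((1-\<tau>) * z powr (1-\<tau>-1)))"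
  proof (rule MVT2)
    fix y assume "x-1 \<le> y" "y \<le> x"
    then show "DERIV (\<lambda>z. z powr (1-\<tau>)) y :> (1-\<tau>) * y powr (1-\<tau>-1)"
      using has_real_derivative_powr[of y "1-\<tau>"] assms by simp
  qed simp
  then obtain z where z: "x-1 < z" "z < x" "x powr (1-\<tau>) - (x-1) powr (1-\<tau>) = (1-\<tau>) * z powr (-\<tau>)"
    by auto
  have "x powr (-\<tau>) \<le> z powr (-\<tau>)"
    by (rule powr_mono2') (use assms z in auto)
  also have "\<dots> = ((x-1) powr (1-\<tau>) - x powr (1-\<tau>)) / (\<tau>-1)"
    using z(3) assms by (simp add: field_simps)
  finally show ?thesis .
qed

lemma tele_sum: fixes \<tau> :: real and Q k :: nat assumes "Q \<ge> 2" "\<tau> > 1"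
  shows "(\<Sum>q\<in>{Q..<Q+k}. real q powr (-\<tau>)) \<le> ((real Q - 1) powr (1-\<tau>) - (real Q - 1 + real k) powr (1-\<tau>)) / (\<tau>-1)"
proof (induction k)
  case 0 then show ?case by simp
next
  case (Suc k)
  have "(\<Sum>q\<in>{Q..<Q+Suc k}. real q powr (-\<tau>)) = (\<Sum>q\<in>{Q..<Q+k}. real q powr (-\<tau>)) + real (Q+k) powr (-\<tau>)"
    by simp
  also have "\<dots> \<le> ((real Q - 1) powr (1-\<tau>) - (real Q - 1 + real k) powr (1-\<tau>)) / (\<tau>-1)
      + ((real (Q+k) - 1) powr (1-\<tau>) - real (Q+k) powr (1-\<tau>)) / (\<tau>-1)"
    using Suc tele[of "real (Q+k)" \<tau>] assms by linarith
  also have "\<dots> = ((real Q - 1) powr (1-\<tau>) - (real Q - 1 + real (Suc k)) powr (1-\<tau>)) / (\<tau>-1)"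
  proof -
    have h1: "real (Q+k) - 1 = real Q - 1 + real k" by simp
    have h2: "real Q - 1 + real (Suc k) = real (Q+k)" by simp
    show ?thesis unfolding h1 h2 by (simp add: diff_divide_distrib)
  qed
  finally show ?case .
qed

lemma sum_bound: fixes \<tau> :: real and Q M :: nat assumes "Q \<ge> 2" "\<tau> > 1"
  shows "(\<Sum>q\<in>{Q..M}. real q powr (-\<tau>)) \<le> (real Q - 1) powr (1-\<tau>) / (\<tau>-1)"
proof -
  have "(\<Sum>q\<in>{Q..M}. real q powr (-\<tau>)) \<le> (\<Sum>q\<in>{Q..<Q+(M+1)}. real q powr (-\<tau>))"
    by (rule sum_mono2) auto
  also have "\<dots> \<le> ((real Q - 1) powr (1-\<tau>) - (real Q - 1 + real (M+1)) powr (1-\<tau>)) / (\<tau>-1)"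
    by (rule tele_sum) (use assms in auto)
  also have "\<dots> \<le> (real Q - 1) powr (1-\<tau>) / (\<tau>-1)"
    using assms by (intro divide_right_mono) auto
  finally show ?thesis .
qed

lemma term_bound: fixes \<gamma> \<tau> :: real and q :: nat assumes "q \<ge> 1" "\<gamma> > 0"
  shows "real (q+1) * (2*\<gamma> / real q powr (\<tau>+1)) \<le> 4*\<gamma> * real q powr (-\<tau>)"
proof -
  have qp: "real q > 0" using assms by simp
  have e: "real q powr (\<tau>+1) = real q * real q powr \<tau>" using qp powr_add[of "real q" \<tau> 1] by simp
  have "real (q+1) * (2*\<gamma> / real q powr (\<tau>+1)) = (2*\<gamma> / real q powr \<tau>) * (real (q+1) / real q)"
    unfolding e using qp by (simp add: field_simps)
  also have "\<dots> \<le> (2*\<gamma> / real q powr \<tau>) * 2"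
    using qp assms by (intro mult_left_mono) (auto simp: field_simps)
  also have "\<dots> = 4*\<gamma> * real q powr (-\<tau>)" by (simp add: powr_minus field_simps)
  finally show ?thesis .
qed

lemma Ioo_fin: "emeasure lborel {a<..<b::real} < top"
  by (cases "a \<le> b") auto

lemma measure_bound:
  fixes \<gamma> \<tau> L R :: real and Qi :: int
  assumes g: "\<gamma> > 0" and t: "\<tau> > 1" and Q2: "Qi \<ge> 2" and L: "0 \<le> L" and R: "R \<le> 1"
  shows "measure lborel (\<Union>(p, q) \<in> {(p::int, q::nat). q \<ge> 1 \<and> real_of_int p / real q \<in> {L<..<R}
                          \<and> int q \<ge> Qi}.
          {real_of_int p / real q - \<gamma> / real q powr (\<tau> + 1) <..<
           real_of_int p / real q + \<gamma> / real q powr (\<tau> + 1)})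
     \<le> 4*\<gamma> * (real_of_int Qi - 1) powr (1-\<tau>) / (\<tau>-1)"
proof -
  define Q where "Q = nat Qi"
  have Q2': "Q \<ge> 2" and QQ: "real_of_int Qi = real Q" using Q2 by (auto simp: Q_def)
  define I where "I = {(p::int, q::nat). q \<ge> 1 \<and> real_of_int p / real q \<in> {L<..<R} \<and> int q \<ge> Qi}"
  define A where "A = (\<lambda>(p::int, q::nat). {real_of_int p / real q - \<gamma> / real q powr (\<tau> + 1) <..<
           real_of_int p / real q + \<gamma> / real q powr (\<tau> + 1)})"
  define g where "g = (\<lambda>q::nat. 2*\<gamma> / real q powr (\<tau>+1))"
  have memI: "0 \<le> p \<and> p \<le> int q \<and> Q \<le> q \<and> 1 \<le> q" if "(p,q) \<in> I" for p q
  proof -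
    have q1: "q \<ge> 1" and lt: "L < real_of_int p / real q" "real_of_int p / real q < R" and qQ: "int q \<ge> Qi"
      using that by (auto simp: I_def)
    have qp: "real q > 0" using q1 by simp
    have "0 < real_of_int p / real q" using lt L by linarith
    then have "p > 0" using qp by (simp add: zero_less_divide_iff)
    moreover have "real_of_int p / real q < 1" using lt R by linarith
    then have "p < int q" using qp by (simp add: divide_less_eq)
    ultimately show ?thesis using q1 qQ by (auto simp: Q_def)
  qed
  have meas: "measure lborel (A i) = g (snd i)" if "i \<in> I" for i
  proof -
    obtain p q where i: "i = (p,q)" by force
    have "q \<ge> 1" using memI that i by blast
    then have "\<gamma> / real q powr (\<tau> + 1) > 0" using g by simp
    then show ?thesis by (simp add: A_def g_def i)
  qed
  have "measure lborel (\<Union>i\<in>I. A i) \<le> 4*\<gamma> * (real Q - 1) powr (1-\<tau>) / (\<tau>-1)"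
  proof (rule measure_UN_bound)
    show "countable I" by (rule countableI_type)
  next
    fix i assume "i \<in> I"
    show "A i \<in> fmeasurable lborel"
      by (rule fmeasurableI) (auto simp: A_def Ioo_fin split: prod.splits)
  next
    fix I' assume I': "I' \<subseteq> I" "finite I'"
    have "measure lborel (\<Union>i\<in>I'. A i) \<le> (\<Sum>i\<in>I'. measure lborel (A i))"
      by (rule measure_UNION_le) (use I' in \<open>auto simp: A_def split: prod.splits\<close>)
    also have "\<dots> = (\<Sum>i\<in>I'. g (snd i))"
      using I' meas by (intro sum.cong) auto
    also have "\<dots> \<le> 4*\<gamma> * (real Q - 1) powr (1-\<tau>) / (\<tau>-1)"
    proof -
      define M where "M = Max (insert 0 (snd ` I'))"
      define T where "T = (\<lambda>(q,p). (p,q)) ` (SIGMA q:{Q..M}. {0..int q})"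
      have sub: "I' \<subseteq> T"
      proof
        fix i assume "i \<in> I'"
        obtain p q where i: "i = (p,q)" by force
        have "q \<le> M" unfolding M_def using I' \<open>i \<in> I'\<close> i
          by (intro Max_ge) force+
        then show "i \<in> T" using memI[of p q] I' \<open>i \<in> I'\<close> i unfolding T_def
          by (auto intro!: image_eqI[of _ _ "(q,p)"])
      qed
      have gnn: "g q \<ge> 0" for q using g by (simp add: g_def)
      have "(\<Sum>i\<in>I'. g (snd i)) \<le> (\<Sum>i\<in>T. g (snd i))"
        by (rule sum_mono2) (use sub gnn in \<open>auto simp: T_def\<close>)
      also have "\<dots> = (\<Sum>(q,p)\<in>(SIGMA q:{Q..M}. {0..int q}). g q)"
        unfolding T_def by (subst sum.reindex) (auto simp: inj_on_def intro!: sum.cong split: prod.splits)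
      also have "\<dots> = (\<Sum>q\<in>{Q..M}. \<Sum>p\<in>{0..int q}. g q)"
        by (rule sum.Sigma[symmetric]) auto
      also have "\<dots> = (\<Sum>q\<in>{Q..M}. real (q+1) * g q)"
        by (intro sum.cong) auto
      also have "\<dots> \<le> (\<Sum>q\<in>{Q..M}. 4*\<gamma> * real q powr (-\<tau>))"
        proof (intro sum_mono)
        fix q assume "q \<in> {Q..M}"
        then have "q \<ge> 1" using Q2' by simp
        then show "real (q+1) * g q \<le> 4*\<gamma> * real q powr (-\<tau>)"
          unfolding g_def by (rule term_bound) (rule g)
      qed
      also have "\<dots> = 4*\<gamma> * (\<Sum>q\<in>{Q..M}. real q powr (-\<tau>))"
        by (simp add: sum_distrib_left)
      also have "\<dots> \<le> 4*\<gamma> * ((real Q - 1) powr (1-\<tau>) / (\<tau>-1))"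
        using sum_bound[OF Q2' t] g by (intro mult_left_mono) auto
      finally show ?thesis by simp
    qed
    finally show "measure lborel (\<Union>i\<in>I'. A i) \<le> 4*\<gamma> * (real Q - 1) powr (1-\<tau>) / (\<tau>-1)" .
  qed
  then show ?thesis unfolding QQ I_def A_def by simp
qed

lemma D_irr:
  assumes "\<gamma> > 0" "\<alpha> \<in> D_set \<gamma> \<tau>"
  shows "\<alpha> \<notin> \<rat>"
proof
  assume "\<alpha> \<in> \<rat>"
  then obtain a b :: int where b: "b > 0" and ab: "\<alpha> = of_int a / of_int b"
    by (auto elim: Rats_cases')
  define q where "q = nat b"
  have q1: "q \<ge> 1" using b by (simp add: q_def)
  have qa: "real q * \<alpha> = of_int a" using b by (simp add: q_def ab)
  have "dist_int (real q * \<alpha>) \<le> 0"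
    unfolding dist_int_def qa
    by (rule cINF_lower2[where x=a]) (auto intro: bdd_belowI[of _ 0])
  moreover have "dist_int (real q * \<alpha>) \<ge> \<gamma> / real q powr \<tau>"
    using assms(2) q1 by (auto simp: D_set_def)
  moreover have "\<gamma> / real q powr \<tau> > 0" using assms(1) q1 by simp
  ultimately show False by linarith
qed

lemma cf_rem_props:
  assumes "\<alpha> \<notin> \<rat>" "0 < \<alpha>" "\<alpha> < 1"
  shows "cf_rem \<alpha> k \<notin> \<rat> \<and> 0 < cf_rem \<alpha> k \<and> cf_rem \<alpha> k < 1"
proof (induction k)
  case 0 then show ?case using assms by simp
next
  case (Suc k)
  define x where "x = cf_rem \<alpha> k"
  have x: "x \<notin> \<rat>" "0 < x" using Suc by (auto simp: x_def)
  have ix: "1/x \<notin> \<rat>"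
  proof
    assume "1/x \<in> \<rat>"
    then have "1/(1/x) \<in> \<rat>" by (rule Rats_divide[OF Rats_1])
    then show False using x by simp
  qed
  have fr: "frac (1/x) \<notin> \<rat>"
  proof
    assume "frac (1/x) \<in> \<rat>"
    then have "frac (1/x) + of_int \<lfloor>1/x\<rfloor> \<in> \<rat>" by (intro Rats_add) auto
    then show False using ix by (simp add: frac_def)
  qed
  have "frac (1/x) \<noteq> 0" using fr by (metis Rats_0)
  then have "0 < frac (1/x)" using frac_ge_0[of "1/x"] by linarith
  then show ?case using fr frac_lt_1[of "1/x"] by (simp add: x_def)
qed

lemma a_ge1:
  assumes "\<alpha> \<notin> \<rat>" "0 < \<alpha>" "\<alpha> < 1" "k \<ge> 1"
  shows "cf_a \<alpha> k \<ge> 1"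
proof -
  have "0 < cf_rem \<alpha> (k-1)" "cf_rem \<alpha> (k-1) < 1" using cf_rem_props[OF assms(1-3)] by auto
  then have "1 / cf_rem \<alpha> (k-1) \<ge> 1" by (simp add: field_simps)
  then show ?thesis unfolding cf_a_def by linarith
qed

lemma Q_props:
  assumes A: "\<And>k. k \<ge> 1 \<Longrightarrow> cf_a \<alpha> k \<ge> 1"
  shows "0 \<le> cf_Q \<alpha> k \<and> 1 \<le> cf_Q \<alpha> (Suc k)"
proof (induction k)
  case 0 then show ?case by simp
next
  case (Suc k)
  have a: "cf_a \<alpha> (Suc k) \<ge> 1" using A by simp
  have "cf_a \<alpha> (Suc k) * cf_Q \<alpha> (Suc k) \<ge> 1 * 1"
    using a Suc by (intro mult_mono) auto
  then show ?case using Suc by simp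
qed

lemma Q_growth:
  assumes A: "\<And>k. k \<ge> 1 \<Longrightarrow> cf_a \<alpha> k \<ge> 1"
  shows "cf_Q \<alpha> (Suc (Suc k)) \<ge> cf_Q \<alpha> k + 1"
proof -
  have a: "cf_a \<alpha> (Suc k) \<ge> 1" using A by simp
  have q: "cf_Q \<alpha> (Suc k) \<ge> 1" using Q_props[OF A, of k] by simp
  have "cf_a \<alpha> (Suc k) * cf_Q \<alpha> (Suc k) \<ge> 1 * 1"
    using a q by (intro mult_mono) auto
  then show ?thesis by simp
qed

lemma Q_lin:
  assumes A: "\<And>k. k \<ge> 1 \<Longrightarrow> cf_a \<alpha> k \<ge> 1"
  shows "cf_Q \<alpha> k \<ge> int (k div 2)"
proof (induction k rule: less_induct)
  case (less k)
  show ?case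
  proof (cases "k < 2")
    case True then show ?thesis using Q_props[OF A, of k] by auto
  next
    case False
    then obtain j where k: "k = Suc (Suc j)" by (metis add_2_eq_Suc le_Suc_ex not_less)
    have "cf_Q \<alpha> j \<ge> int (j div 2)" using less k by simp
    then show ?thesis using Q_growth[OF A, of j] k by simp
  qed
qed

lemma P_props:
  assumes A: "\<And>k. k \<ge> 1 \<Longrightarrow> cf_a \<alpha> k \<ge> 1"
  shows "0 \<le> cf_P \<alpha> (Suc k) \<and> cf_P \<alpha> (Suc k) \<le> cf_Q \<alpha> (Suc k) \<and>
         0 \<le> cf_P \<alpha> (Suc (Suc k)) \<and> cf_P \<alpha> (Suc (Suc k)) \<le> cf_Q \<alpha> (Suc (Suc k))"
proof (induction k)
  case 0 then show ?case using A[of 1] by simp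
next
  case (Suc k)
  have a: "cf_a \<alpha> (Suc (Suc k)) \<ge> 1" using A by simp
  have "cf_a \<alpha> (Suc (Suc k)) * cf_P \<alpha> (Suc (Suc k)) \<le> cf_a \<alpha> (Suc (Suc k)) * cf_Q \<alpha> (Suc (Suc k))"
    using a Suc by (intro mult_left_mono) auto
  moreover have "0 \<le> cf_a \<alpha> (Suc (Suc k)) * cf_P \<alpha> (Suc (Suc k))" using a Suc by simp
  ultimately show ?case using Suc by simp
qed

lemma lim_aux: fixes \<tau> :: real shows "((\<lambda>x::real. (1 - 1/x) powr (\<tau>-1)) \<longlongrightarrow> 1) at_top"
  by real_asymp


theorem lemma3:
  fixes \<gamma> \<tau> \<alpha> :: real
  assumes "\<gamma> > 0" and "\<tau> > 3" and "\<alpha> \<in> D_set \<gamma> \<tau>"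
  shows "\<exists>N::nat. \<forall>n::nat. even n \<and> n > N \<longrightarrow>
     measure lborel
       (\<Union>(p, q) \<in> {(p::int, q::nat). q \<ge> 1 \<and> real_of_int p / real q \<in> I_int \<alpha> n
                          \<and> int q \<ge> conv_q \<alpha> (n+2)}.
          {real_of_int p / real q - \<gamma> / real q powr (\<tau> + 1) <..<
           real_of_int p / real q + \<gamma> / real q powr (\<tau> + 1)})
     < 2 * \<gamma> / real_of_int (conv_q \<alpha> (n+2)) powr (\<tau> - 1)"
proof -
  have a01: "0 < \<alpha>" "\<alpha> < 1" using assms(3) by (auto simp: D_set_def)
  have irr: "\<alpha> \<notin> \<rat>" by (rule D_irr[OF assms(1) assms(3)])
  have A: "\<And>k. k \<ge> 1 \<Longrightarrow> cf_a \<alpha> k \<ge> 1" using a_ge1[OF irr a01] by blast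
  have t1: "\<tau> > 1" using assms(2) by simp
  have c1: "2/(\<tau>-1) < 1" using assms(2) by (simp add: field_simps)
  have "\<forall>\<^sub>F x in at_top. (1 - 1/x) powr (\<tau>-1) > 2/(\<tau>-1)"
    by (rule order_tendstoD(1)[OF lim_aux c1])
  then obtain X where X: "\<And>x. x \<ge> X \<Longrightarrow> (1 - 1/x) powr (\<tau>-1) > 2/(\<tau>-1)"
    by (auto simp: eventually_at_top_linorder)
  define K where "K = nat \<lceil>max X 2\<rceil>"
  have K: "real K \<ge> max X 2" unfolding K_def by (rule real_nat_ceiling_ge)
  define N where "N = 2 * K"
  show ?thesis
  proof (intro exI[of _ N] allI impI)
    fix n :: nat assume n: "even n \<and> n > N"
    define Qi where "Qi = conv_q \<alpha> (n+2)"
    have "Qi \<ge> int ((n+3) div 2)" unfolding Qi_def conv_q_def using Q_lin[OF A, of "Suc (n+2)"] by simp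
    moreover have "(n+3) div 2 \<ge> K" using n unfolding N_def by presburger
    ultimately have "Qi \<ge> int K" by linarith
    then have "real_of_int Qi \<ge> real K" by linarith
    then have Qge: "real_of_int Qi \<ge> max X 2" using K by linarith
    have L: "0 \<le> real_of_int (conv_p \<alpha> n) / real_of_int (conv_q \<alpha> n)"
      using P_props[OF A, of n] unfolding conv_p_def conv_q_def by simp
    have R: "real_of_int (conv_p \<alpha> (n+2)) / real_of_int (conv_q \<alpha> (n+2)) \<le> 1"
    proof -
      define PP where "PP = conv_p \<alpha> (n+2)"
      define QQ where "QQ = conv_q \<alpha> (n+2)"
      have "PP \<le> QQ" "1 \<le> QQ"
        using P_props[OF A, of "n+2"] Q_props[OF A, of "n+2"] unfolding PP_def QQ_def conv_p_def conv_q_def by auto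
      then have "real_of_int PP / real_of_int QQ \<le> 1" by (simp add: divide_le_eq)
      then show ?thesis unfolding PP_def QQ_def .
    qed
    have Q2: "Qi \<ge> 2" using Qge by linarith
    have mb: "measure lborel
       (\<Union>(p, q) \<in> {(p::int, q::nat). q \<ge> 1 \<and> real_of_int p / real q \<in> I_int \<alpha> n
                          \<and> int q \<ge> Qi}.
          {real_of_int p / real q - \<gamma> / real q powr (\<tau> + 1) <..<
           real_of_int p / real q + \<gamma> / real q powr (\<tau> + 1)})
     \<le> 4*\<gamma> * (real_of_int Qi - 1) powr (1-\<tau>) / (\<tau>-1)"
      unfolding I_int_def by (rule measure_bound[OF assms(1) t1 Q2 L R])
    define x where "x = real_of_int Qi"
    have x2: "x \<ge> 2" using Q2 by (simp add: x_def)
    define c where "c = (1 - 1/x) powr (\<tau>-1)"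
    have c: "c > 2/(\<tau>-1)" using X Qge by (simp add: c_def x_def)
    have cpos: "c > 0" using c t1 by (smt (verit) divide_pos_pos)
    have xm: "x - 1 = (1 - 1/x) * x" using x2 by (simp add: field_simps)
    have e: "(x-1) powr (1-\<tau>) = 1 / (c * x powr (\<tau>-1))"
    proof -
      have "(x-1) powr (1-\<tau>) = (1 - 1/x) powr (1-\<tau>) * x powr (1-\<tau>)"
        unfolding xm using x2 by (intro powr_mult; auto simp: field_simps)
      also have "(1 - 1/x) powr (1-\<tau>) = 1 / c"
        unfolding c_def using powr_minus_divide[of "1 - 1/x" "\<tau>-1"] by simp
      also have "x powr (1-\<tau>) = 1 / x powr (\<tau>-1)"
        using powr_minus_divide[of x "\<tau>-1"] by simp
      finally show ?thesis by simp
    qed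
    have xp: "x powr (\<tau>-1) > 0" using x2 by simp
    have K: "(\<tau>-1) * c > 2" using c t1 by (simp add: field_simps)
    have "4*\<gamma> * (x - 1) powr (1-\<tau>) / (\<tau>-1) = (2*\<gamma> / x powr (\<tau>-1)) * (2 / ((\<tau>-1) * c))"
      unfolding e using t1 cpos xp by (simp add: field_simps)
    also have "\<dots> < (2*\<gamma> / x powr (\<tau>-1)) * 1"
      using K assms(1) xp by (intro mult_strict_left_mono) auto
    finally have "4*\<gamma> * (x - 1) powr (1-\<tau>) / (\<tau>-1) < 2*\<gamma> / x powr (\<tau>-1)" by simp
    with mb show "measure lborel
       (\<Union>(p, q) \<in> {(p::int, q::nat). q \<ge> 1 \<and> real_of_int p / real q \<in> I_int \<alpha> n
                          \<and> int q \<ge> conv_q \<alpha> (n+2)}.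
          {real_of_int p / real q - \<gamma> / real q powr (\<tau> + 1) <..<
           real_of_int p / real q + \<gamma> / real q powr (\<tau> + 1)})
     < 2 * \<gamma> / real_of_int (conv_q \<alpha> (n+2)) powr (\<tau> - 1)"
      unfolding x_def Qi_def by linarith
  qed
qed

end
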